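(* Let $\sigma:\mathbb{R}\to\mathbb{R}$ be an increasing odd homeomorphism and let $(p_n=(x_n,y_n))_{n\geq0}$ be a sequence in $\mathbb{R}^2$ tending to $0$, such that either all the $x_n$ are nonzero and of the same sign, or all the $y_n$ are nonzero and of the same sign. Then the closure of $\{w(p_n):n\in\mathbb N,\ w\in\mathcal M_\sigma(X)\}$ contains: $Ox_+=\mathbb{R}_{\geq0}\times\{0\}$ if all $y_n>0$; $Ox_-=\mathbb{R}_{\leq0}\times\{0\}$ if all $y_n<0$; $Oy_+=\{0\}\times\mathbb{R}_{\geq0}$ if all $x_n>0$; $Oy_-=\{0\}\times\mathbb{R}_{\leq0}$ if all $x_n<0$.
   Context: $h_\sigma(x,y)=(x+\sigma^{-1}(y),y)$, $v_\sigma(x,y)=(x,\sigma(x)+y)$, and $\mathcal M_\sigma(X)$ is the monoid (containing the identity) generated by $h_\sigma$ and $v_\sigma$ under composition. *)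

theory Defs
  imports "HOL-Analysis.Analysis"
begin

definition hmap :: "(real \<Rightarrow> real) \<Rightarrow> real \<times> real \<Rightarrow> real \<times> real" where
  "hmap \<sigma> = (\<lambda>(x, y). (x + inv \<sigma> y, y))"

definition vmap :: "(real \<Rightarrow> real) \<Rightarrow> real \<times> real \<Rightarrow> real \<times> real" where
  "vmap \<sigma> = (\<lambda>(x, y). (x, \<sigma> x + y))"

inductive_set Msigma :: "(real \<Rightarrow> real) \<Rightarrow> (real \<times> real \<Rightarrow> real \<times> real) set"
  for \<sigma> :: "real \<Rightarrow> real" where
  id_in: "id \<in> Msigma \<sigma>"
| h_comp: "w \<in> Msigma \<sigma> \<Longrightarrow> hmap \<sigma> \<circ> w \<in> Msigma \<sigma>"
| v_comp: "w \<in> Msigma \<sigma> \<Longrightarrow> vmap \<sigma> \<circ> w \<in> Msigma \<sigma>"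

end

theory Submission
  imports Defs
begin

lemma ev_abs:
  fixes a :: "nat \<Rightarrow> real"
  assumes a: "a \<longlonglongrightarrow> 0" and e: "e > 0"
  shows "\<forall>\<^sub>F n in sequentially. \<bar>a n\<bar> < e"
proof -
  have "\<forall>\<^sub>F n in sequentially. dist (a n) 0 < e"
    using tendsto_iff[THEN iffD1, OF a] e by blast
  then show ?thesis by (simp add: dist_real_def)
qed

lemma approx_core:
  fixes a d b :: "nat \<Rightarrow> real"
  assumes a: "a \<longlonglongrightarrow> 0" and d: "d \<longlonglongrightarrow> 0" and b: "b \<longlonglongrightarrow> 0"
    and dpos: "\<And>n. d n > 0" and t: "t \<ge> 0" and e: "e > 0"
  shows "\<exists>n k. \<bar>a n + real k * d n - t\<bar> < e \<and> \<bar>b n\<bar> < e"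
proof -
  have "\<forall>\<^sub>F n in sequentially. \<bar>a n\<bar> < e \<and> \<bar>d n\<bar> < e \<and> \<bar>b n\<bar> < e"
    by (rule eventually_conj[OF ev_abs[OF a e] eventually_conj[OF ev_abs[OF d e] ev_abs[OF b e]]])
  then obtain N where "\<And>n. n \<ge> N \<Longrightarrow> \<bar>a n\<bar> < e \<and> \<bar>d n\<bar> < e \<and> \<bar>b n\<bar> < e"
    unfolding eventually_sequentially by blast
  then have "\<bar>a N\<bar> < e \<and> \<bar>d N\<bar> < e \<and> \<bar>b N\<bar> < e" by simp
  then obtain n where n: "\<bar>a n\<bar> < e" "\<bar>d n\<bar> < e" "\<bar>b n\<bar> < e" by blast
  show ?thesis
  proof (cases "t \<le> a n")
    case True
    then have "\<bar>a n + real 0 * d n - t\<bar> < e" using n t by simp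
    then show ?thesis using n by blast
  next
    case False
    define q where "q = (t - a n) / d n"
    define k where "k = nat \<lceil>q\<rceil>"
    have dn: "d n > 0" by (rule dpos)
    have q: "q > 0" unfolding q_def using False dn by simp
    have kq: "real k = of_int \<lceil>q\<rceil>" unfolding k_def using q by simp
    have k1: "real k \<ge> q" using kq le_of_int_ceiling[of q] by simp
    have k2: "real k \<le> q + 1" using kq of_int_ceiling_le_add_one[of q] by simp
    have qd: "q * d n = t - a n" unfolding q_def using dn by simp
    have "real k * d n \<ge> q * d n" using k1 dn by (simp add: mult_right_mono)
    moreover have "real k * d n \<le> (q + 1) * d n" using k2 dn by (simp add: mult_right_mono)
    ultimately have "t - a n \<le> real k * d n" "real k * d n \<le> t - a n + d n"
      using qd by (simp_all add: distrib_right)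
    then have "\<bar>a n + real k * d n - t\<bar> < e" using n dn by simp
    then show ?thesis using n by blast
  qed
qed

lemma closure_pt:
  fixes S :: "(real \<times> real) set"
  assumes "\<And>e. e > 0 \<Longrightarrow> \<exists>u v. (u, v) \<in> S \<and> \<bar>u - x\<bar> < e \<and> \<bar>v - y\<bar> < e"
  shows "(x, y) \<in> closure S"
proof (subst closure_approachable, intro allI impI)
  fix e :: real assume e: "e > 0"
  then obtain u v where uv: "(u, v) \<in> S" "\<bar>u - x\<bar> < e/2" "\<bar>v - y\<bar> < e/2"
    using assms[of "e/2"] by auto
  have "dist (u, v) (x, y) = sqrt ((u - x)\<^sup>2 + (v - y)\<^sup>2)"
    by (simp add: dist_Pair_Pair dist_real_def)
  also have "\<dots> \<le> \<bar>u - x\<bar> + \<bar>v - y\<bar>" by (rule sqrt_sum_squares_le_sum_abs)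
  also have "\<dots> < e" using uv by simp
  finally show "\<exists>z\<in>S. dist z (x, y) < e" using uv by blast
qed

lemma hpow: "(hmap \<sigma> ^^ k) (x, y) = (x + real k * inv \<sigma> y, y)"
  by (induction k) (auto simp: hmap_def algebra_simps)

lemma vpow: "(vmap \<sigma> ^^ k) (x, y) = (x, y + real k * \<sigma> x)"
  by (induction k) (auto simp: vmap_def algebra_simps)

lemma hpow_in: "hmap \<sigma> ^^ k \<in> Msigma \<sigma>"
  by (induction k) (metis funpow.simps(1) Msigma.id_in, metis funpow.simps(2) Msigma.h_comp)

lemma vpow_in: "vmap \<sigma> ^^ k \<in> Msigma \<sigma>"
  by (induction k) (metis funpow.simps(1) Msigma.id_in, metis funpow.simps(2) Msigma.v_comp)

theorem lemma4:
  fixes \<sigma> :: "real \<Rightarrow> real" and p :: "nat \<Rightarrow> real \<times> real"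
  assumes incr: "strict_mono \<sigma>"
    and homeo: "\<exists>\<tau>. homeomorphism UNIV UNIV \<sigma> \<tau>"
    and odd: "\<And>x. \<sigma> (- x) = - \<sigma> x"
    and lim: "p \<longlonglongrightarrow> 0"
    and signs: "(\<forall>n. fst (p n) > 0) \<or> (\<forall>n. fst (p n) < 0) \<or>
                (\<forall>n. snd (p n) > 0) \<or> (\<forall>n. snd (p n) < 0)"
  shows "((\<forall>n. snd (p n) > 0) \<longrightarrow>
            {(t, 0) | t. t \<ge> 0} \<subseteq> closure {w (p n) | n w. w \<in> Msigma \<sigma>}) \<and>
         ((\<forall>n. snd (p n) < 0) \<longrightarrow>
            {(t, 0) | t. t \<le> 0} \<subseteq> closure {w (p n) | n w. w \<in> Msigma \<sigma>}) \<and>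
         ((\<forall>n. fst (p n) > 0) \<longrightarrow>
            {(0, t) | t. t \<ge> 0} \<subseteq> closure {w (p n) | n w. w \<in> Msigma \<sigma>}) \<and>
         ((\<forall>n. fst (p n) < 0) \<longrightarrow>
            {(0, t) | t. t \<le> 0} \<subseteq> closure {w (p n) | n w. w \<in> Msigma \<sigma>})"
proof -
  let ?S = "{w (p n) | n w. w \<in> Msigma \<sigma>}"
  obtain \<tau> where hom: "homeomorphism UNIV UNIV \<sigma> \<tau>" using homeo by blast
  have st: "\<And>y. \<sigma> (\<tau> y) = y" using hom by (simp add: homeomorphism_def)
  have ts: "\<And>x. \<tau> (\<sigma> x) = x" using hom by (simp add: homeomorphism_def)
  have ctau: "continuous_on UNIV \<tau>" and csig: "continuous_on UNIV \<sigma>"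
    using hom by (auto simp: homeomorphism_def)
  have inj: "inj \<sigma>" by (rule injI) (metis ts)
  have invt: "\<And>y. inv \<sigma> y = \<tau> y" by (rule inv_f_eq[OF inj st])
  have s0: "\<sigma> 0 = 0" using odd[of 0] by simp
  have t0: "\<tau> 0 = 0" using ts[of 0] s0 by simp
  have sl: "\<And>a b. (\<sigma> a < \<sigma> b) = (a < b)" by (rule strict_mono_less[OF incr])
  have spos: "\<And>x. x > 0 \<Longrightarrow> \<sigma> x > 0" using sl[of 0] s0 by simp
  have sneg: "\<And>x. x < 0 \<Longrightarrow> \<sigma> x < 0" using sl[of _ 0] s0 by simp
  have tpos: "\<And>y. y > 0 \<Longrightarrow> \<tau> y > 0"
  proof -
    fix y :: real assume "y > 0"
    then have "\<sigma> 0 < \<sigma> (\<tau> y)" using st s0 by simp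
    then show "\<tau> y > 0" using sl by simp
  qed
  have tneg: "\<And>y. y < 0 \<Longrightarrow> \<tau> y < 0"
  proof -
    fix y :: real assume "y < 0"
    then have "\<sigma> (\<tau> y) < \<sigma> 0" using st s0 by simp
    then show "\<tau> y < 0" using sl by simp
  qed
  have fx: "(\<lambda>n. fst (p n)) \<longlonglongrightarrow> 0" using tendsto_fst[OF lim] by simp
  have fy: "(\<lambda>n. snd (p n)) \<longlonglongrightarrow> 0" using tendsto_snd[OF lim] by simp
  have ty: "(\<lambda>n. \<tau> (snd (p n))) \<longlonglongrightarrow> 0"
    using continuous_on_tendsto_compose[OF ctau fy] t0 by simp
  have sx: "(\<lambda>n. \<sigma> (fst (p n))) \<longlonglongrightarrow> 0"
    using continuous_on_tendsto_compose[OF csig fx] s0 by simp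
  have hS: "\<And>n k. (fst (p n) + real k * \<tau> (snd (p n)), snd (p n)) \<in> ?S"
  proof -
    fix n k
    have "(hmap \<sigma> ^^ k) (p n) = (fst (p n) + real k * \<tau> (snd (p n)), snd (p n))"
      using hpow[where \<sigma>=\<sigma> and k=k and x="fst (p n)" and y="snd (p n)"] invt by simp
    then show "(fst (p n) + real k * \<tau> (snd (p n)), snd (p n)) \<in> ?S"
      using hpow_in by (metis (mono_tags, lifting) mem_Collect_eq)
  qed
  have vS: "\<And>n k. (fst (p n), snd (p n) + real k * \<sigma> (fst (p n))) \<in> ?S"
  proof -
    fix n k
    have "(vmap \<sigma> ^^ k) (p n) = (fst (p n), snd (p n) + real k * \<sigma> (fst (p n)))"
      using vpow[where \<sigma>=\<sigma> and k=k and x="fst (p n)" and y="snd (p n)"] by simp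
    then show "(fst (p n), snd (p n) + real k * \<sigma> (fst (p n))) \<in> ?S"
      using vpow_in by (metis (mono_tags, lifting) mem_Collect_eq)
  qed
  have c1: "{(t, 0) | t. t \<ge> 0} \<subseteq> closure ?S" if pos: "\<forall>n. snd (p n) > 0"
  proof clarify
    fix t :: real assume t: "t \<ge> 0"
    show "(t, 0) \<in> closure ?S"
    proof (rule closure_pt)
      fix e :: real assume e: "e > 0"
      obtain n k where nk: "\<bar>fst (p n) + real k * \<tau> (snd (p n)) - t\<bar> < e" "\<bar>snd (p n)\<bar> < e"
        using approx_core[OF fx ty fy _ t e] tpos pos by blast
      then show "\<exists>u v. (u, v) \<in> ?S \<and> \<bar>u - t\<bar> < e \<and> \<bar>v - 0\<bar> < e"
        using hS[of n k] by (intro exI[of _ "fst (p n) + real k * \<tau> (snd (p n))"] exI[of _ "snd (p n)"] conjI) simp_all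
    qed
  qed
  have c2: "{(t, 0) | t. t \<le> 0} \<subseteq> closure ?S" if neg: "\<forall>n. snd (p n) < 0"
  proof clarify
    fix t :: real assume t: "t \<le> 0"
    show "(t, 0) \<in> closure ?S"
    proof (rule closure_pt)
      fix e :: real assume e: "e > 0"
      have fx': "(\<lambda>n. - fst (p n)) \<longlonglongrightarrow> 0" using tendsto_minus[OF fx] by simp
      have ty': "(\<lambda>n. - \<tau> (snd (p n))) \<longlonglongrightarrow> 0" using tendsto_minus[OF ty] by simp
      obtain n k where nk: "\<bar>- fst (p n) + real k * (- \<tau> (snd (p n))) - (-t)\<bar> < e" "\<bar>snd (p n)\<bar> < e"
        using approx_core[OF fx' ty' fy _ _ e, of "-t"] tneg neg t by fastforce
      have "\<bar>fst (p n) + real k * \<tau> (snd (p n)) - t\<bar> < e" using nk(1) by (simp add: abs_minus_commute algebra_simps)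
      then show "\<exists>u v. (u, v) \<in> ?S \<and> \<bar>u - t\<bar> < e \<and> \<bar>v - 0\<bar> < e"
        using hS[of n k] nk(2) by (intro exI[of _ "fst (p n) + real k * \<tau> (snd (p n))"] exI[of _ "snd (p n)"] conjI) simp_all
    qed
  qed
  have c3: "{(0, t) | t. t \<ge> 0} \<subseteq> closure ?S" if pos: "\<forall>n. fst (p n) > 0"
  proof clarify
    fix t :: real assume t: "t \<ge> 0"
    show "(0, t) \<in> closure ?S"
    proof (rule closure_pt)
      fix e :: real assume e: "e > 0"
      obtain n k where nk: "\<bar>snd (p n) + real k * \<sigma> (fst (p n)) - t\<bar> < e" "\<bar>fst (p n)\<bar> < e"
        using approx_core[OF fy sx fx _ t e] spos pos by blast
      then show "\<exists>u v. (u, v) \<in> ?S \<and> \<bar>u - 0\<bar> < e \<and> \<bar>v - t\<bar> < e"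
        using vS[of n k] by (intro exI[of _ "fst (p n)"] exI[of _ "snd (p n) + real k * \<sigma> (fst (p n))"] conjI) simp_all
    qed
  qed
  have c4: "{(0, t) | t. t \<le> 0} \<subseteq> closure ?S" if neg: "\<forall>n. fst (p n) < 0"
  proof clarify
    fix t :: real assume t: "t \<le> 0"
    show "(0, t) \<in> closure ?S"
    proof (rule closure_pt)
      fix e :: real assume e: "e > 0"
      have fy': "(\<lambda>n. - snd (p n)) \<longlonglongrightarrow> 0" using tendsto_minus[OF fy] by simp
      have sx': "(\<lambda>n. - \<sigma> (fst (p n))) \<longlonglongrightarrow> 0" using tendsto_minus[OF sx] by simp
      obtain n k where nk: "\<bar>- snd (p n) + real k * (- \<sigma> (fst (p n))) - (-t)\<bar> < e" "\<bar>fst (p n)\<bar> < e"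
        using approx_core[OF fy' sx' fx _ _ e, of "-t"] sneg neg t by fastforce
      have "\<bar>snd (p n) + real k * \<sigma> (fst (p n)) - t\<bar> < e" using nk(1) by (simp add: abs_minus_commute algebra_simps)
      then show "\<exists>u v. (u, v) \<in> ?S \<and> \<bar>u - 0\<bar> < e \<and> \<bar>v - t\<bar> < e"
        using vS[of n k] nk(2) by (intro exI[of _ "fst (p n)"] exI[of _ "snd (p n) + real k * \<sigma> (fst (p n))"] conjI) simp_all
    qed
  qed
  show ?thesis
    apply (intro conjI impI)
       apply (erule c1)
      apply (erule c2)
     apply (erule c3)
    apply (erule c4)
    done
qed

end
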